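(* Let $n\ge 1$, $A\in\mathbb{R}^{n\times n}$ and $C\in\mathbb{R}^{1\times n}$, with $(A,C)$ an observable pair and all eigenvalues of $A$ nonzero. Let $t_1,\ldots,t_n$ be nonnegative integers such that the matrix with rows $CA^{t_1},\ldots,CA^{t_n}$ has rank less than $n$. Then for every positive integer $\Delta$ that is not a pathological sampling period of $A$, the matrix with rows $CA^{t_1},\ldots,CA^{t_n},CA^{t_1+\Delta},\ldots,CA^{t_n+\Delta}$ has strictly larger rank than the matrix with rows $CA^{t_1},\ldots,CA^{t_n}$.
   Context: Setting: discrete-time single-output system $x(t+1)=Ax(t)+Bu(t)$, $y(t)=Cx(t)+Du(t)$ with output measured at selected time instances; matrices with rows $CA^{t_i}$ are sample-based observability matrices. $(A,C)$ observable means the matrix with rows $C,CA,\ldots,CA^{n-1}$ has rank $n$. A positive integer $h$ is a pathological sampling period of $A$ if there exist two distinct eigenvalues $\lambda_p\neq\lambda_q$ of $A$ in different Jordan blocks with $\lambda_p^h=\lambda_q^h$. *)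

theory Defs
  imports "Jordan_Normal_Form.DL_Rank" "Jordan_Normal_Form.Char_Poly"
begin

(* rank of a real matrix with m rows: dimension of its column space in R^m
   (= row rank) *)
abbreviation mrank :: "nat \<Rightarrow> real mat \<Rightarrow> nat" where
  "mrank m M \<equiv> vec_space.rank m M"

definition out_row :: "real mat \<Rightarrow> real mat \<Rightarrow> nat \<Rightarrow> real vec" where
  "out_row C A t = row (C * A ^\<^sub>m t) 0"

definition sample_obs_mat :: "nat \<Rightarrow> real mat \<Rightarrow> real mat \<Rightarrow> nat list \<Rightarrow> real mat" where
  "sample_obs_mat n C A ts = mat_of_rows n (map (out_row C A) ts)"

definition observable :: "nat \<Rightarrow> real mat \<Rightarrow> real mat \<Rightarrow> bool" where
  "observable n A C \<longleftrightarrow> mrank n (sample_obs_mat n C A [0..<n]) = n"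

definition ceigenvalue :: "real mat \<Rightarrow> complex \<Rightarrow> bool" where
  "ceigenvalue A lam \<longleftrightarrow> eigenvalue (map_mat complex_of_real A) lam"

definition pathological :: "real mat \<Rightarrow> nat \<Rightarrow> bool" where
  "pathological A h \<longleftrightarrow> h > 0 \<and>
     (\<exists>p q. ceigenvalue A p \<and> ceigenvalue A q \<and> p \<noteq> q \<and> p ^ h = q ^ h)"

end

theory Submission
  imports Defs "HOL-Computational_Algebra.Fundamental_Theorem_Algebra"
begin

lemma pow_mat_Suc_left:
  assumes A: "(A :: 'a :: semiring_1 mat) \<in> carrier_mat n n"
  shows "A ^\<^sub>m Suc k = A * A ^\<^sub>m k"
proof (induct k)
  case 0 then show ?case using A by simp
next
  case (Suc k)
  have "A ^\<^sub>m Suc (Suc k) = (A * A ^\<^sub>m k) * A" using Suc by simp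
  also have "\<dots> = A * (A ^\<^sub>m k * A)" using A by (simp add: assoc_mult_mat[of _ n n _ n _ n])
  finally show ?case by simp
qed

lemma pow_mat_add:
  assumes A: "(A :: 'a :: semiring_1 mat) \<in> carrier_mat n n"
  shows "A ^\<^sub>m (a + b) = A ^\<^sub>m a * A ^\<^sub>m b"
proof (induct b)
  case 0 then show ?case using A by simp
next
  case (Suc b)
  have "A ^\<^sub>m (a + Suc b) = (A ^\<^sub>m a * A ^\<^sub>m b) * A" using Suc by simp
  also have "\<dots> = A ^\<^sub>m a * (A ^\<^sub>m b * A)" using A by (simp add: assoc_mult_mat[of _ n n _ n _ n])
  finally show ?case by simp
qed

lemma mat_vec_lin_sum:
  fixes A :: "'a :: comm_semiring_0 mat"
  assumes A: "A \<in> carrier_mat m n" and w: "\<And>j. j \<in> J \<Longrightarrow> w j \<in> carrier_vec n"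
  shows "A *\<^sub>v vec n (\<lambda>i. \<Sum>j\<in>J. c j * w j $ i) = vec m (\<lambda>i. \<Sum>j\<in>J. c j * (A *\<^sub>v w j) $ i)"
proof (rule eq_vecI)
  show "dim_vec (A *\<^sub>v vec n (\<lambda>i. \<Sum>j\<in>J. c j * w j $ i)) = dim_vec (vec m (\<lambda>i. \<Sum>j\<in>J. c j * (A *\<^sub>v w j) $ i))"
    using A by simp
  fix i assume "i < dim_vec (vec m (\<lambda>i. \<Sum>j\<in>J. c j * (A *\<^sub>v w j) $ i))"
  then have i: "i < m" by simp
  have "(A *\<^sub>v vec n (\<lambda>i. \<Sum>j\<in>J. c j * w j $ i)) $ i = (\<Sum>l<n. A $$ (i,l) * (\<Sum>j\<in>J. c j * w j $ l))"
    using A i by (simp add: scalar_prod_def lessThan_atLeast0)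
  also have "\<dots> = (\<Sum>l<n. \<Sum>j\<in>J. c j * (A $$ (i,l) * w j $ l))"
    by (simp add: sum_distrib_left mult.left_commute)
  also have "\<dots> = (\<Sum>j\<in>J. c j * (\<Sum>l<n. A $$ (i,l) * w j $ l))"
    by (subst sum.swap) (simp add: sum_distrib_left)
  also have "\<dots> = (\<Sum>j\<in>J. c j * (A *\<^sub>v w j) $ i)"
  proof (intro sum.cong refl)
    fix j assume "j \<in> J"
    then have "dim_vec (w j) = n" using w by auto
    then show "c j * (\<Sum>l<n. A $$ (i,l) * w j $ l) = c j * (A *\<^sub>v w j) $ i"
      using A i by (auto simp: scalar_prod_def lessThan_atLeast0 intro!: sum.cong)
  qed
  finally show "(A *\<^sub>v vec n (\<lambda>i. \<Sum>j\<in>J. c j * w j $ i)) $ i = vec m (\<lambda>i. \<Sum>j\<in>J. c j * (A *\<^sub>v w j) $ i) $ i"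
    using i by simp
qed


lemma roots_exist:
  fixes \<mu> :: complex and D :: nat
  assumes D: "D > 0" and mu: "\<mu> \<noteq> 0"
  obtains \<zeta> :: "nat \<Rightarrow> complex" where "\<And>k. \<zeta> k ^ D = \<mu>"
    "\<And>k l. k < D \<Longrightarrow> l < D \<Longrightarrow> \<zeta> k = \<zeta> l \<Longrightarrow> k = l"
    "\<And>m. 0 < m \<Longrightarrow> m < D \<Longrightarrow> (\<Sum>k<D. \<zeta> k ^ m) = 0"
proof -
  have cd: "card {z::complex. z ^ D = \<mu>} = D" using card_nth_roots[OF mu D] .
  have "{z::complex. z ^ D = \<mu>} \<noteq> {}"
  proof
    assume "{z::complex. z ^ D = \<mu>} = {}"
    then show False using cd D by simp
  qed
  then obtain c where c: "c ^ D = \<mu>" by auto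
  then have c0: "c \<noteq> 0" using mu D by auto
  define \<omega> where "\<omega> = cis (2 * pi / real D)"
  have ompow: "\<omega> ^ k = cis (2 * pi * real k / real D)" for k
    by (simp add: \<omega>_def DeMoivre mult_ac)
  have omD: "\<omega> ^ D = 1" using D by (simp add: ompow complex_eq_iff)
  have om1: "\<omega> ^ m \<noteq> 1" if m: "0 < m" "m < D" for m
  proof
    assume "\<omega> ^ m = 1"
    then have "cos (2 * pi * real m / real D) = 1"
      by (simp add: ompow complex_eq_iff)
    then obtain x :: int where x: "2 * pi * real m / real D = real_of_int x * 2 * pi"
      by (auto simp: cos_one_2pi_int)
    then have "real m = real_of_int x * real D" using D by (simp add: field_simps)
    then have "int m = x * int D" by (metis of_int_eq_iff of_int_mult of_int_of_nat_eq)
    show False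
    proof (cases "x \<le> 0")
      case True
      then have "x * int D \<le> 0" by (simp add: mult_nonpos_nonneg)
      then show False using m \<open>int m = x * int D\<close> by linarith
    next
      case False
      then have "1 * int D \<le> x * int D" by (intro mult_right_mono) auto
      then show False using m \<open>int m = x * int D\<close> by linarith
    qed
  qed
  have om0: "\<omega> \<noteq> 0" using omD D by (metis power_0_left less_irrefl zero_neq_one)
  define \<zeta> where "\<zeta> k = c * \<omega> ^ k" for k
  show ?thesis
  proof
    fix k show "\<zeta> k ^ D = \<mu>"
      unfolding \<zeta>_def power_mult_distrib c
      by (simp add: power_mult[symmetric] mult.commute[of k D] power_mult omD)
  next
    have *: False if "k < l" "l < D" "\<zeta> k = \<zeta> l" for k l
    proof -
      have e1: "\<omega> ^ k = \<omega> ^ l" using that c0 by (simp add: \<zeta>_def)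
      have "\<omega> ^ l = \<omega> ^ k * \<omega> ^ (l - k)" using that
        by (simp add: power_add[symmetric])
      with e1 have "\<omega> ^ k = \<omega> ^ k * \<omega> ^ (l - k)" by simp
      then have "\<omega> ^ (l - k) = 1" using om0 by simp
      with om1[of "l - k"] that show False by linarith
    qed
    fix k l assume "k < D" "l < D" "\<zeta> k = \<zeta> l"
    then show "k = l" using *[of k l] *[of l k] by (cases k l rule: linorder_cases) auto
  next
    fix m assume m: "0 < m" "m < D"
    have "(\<Sum>k<D. \<zeta> k ^ m) = c ^ m * (\<Sum>k<D. (\<omega> ^ m) ^ k)"
      by (simp add: \<zeta>_def power_mult_distrib sum_distrib_left power_mult[symmetric] mult.commute)
    also have "(\<Sum>k<D. (\<omega> ^ m) ^ k) = ((\<omega> ^ m) ^ D - 1) / (\<omega> ^ m - 1)"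
      using om1[OF m] by (rule geometric_sum)
    also have "(\<omega> ^ m) ^ D = 1"
      by (simp add: power_mult[symmetric] mult.commute[of m D] power_mult omD)
    finally show "(\<Sum>k<D. \<zeta> k ^ m) = 0" by simp
  qed
qed


lemma root_eigvec:
  fixes A :: "complex mat" and y :: "complex vec"
  assumes A: "A \<in> carrier_mat n n" and y: "y \<in> carrier_vec n" and y0: "y \<noteq> 0\<^sub>v n"
    and D: "D > 0" and Ay: "(A ^\<^sub>m D) *\<^sub>v y = \<mu> \<cdot>\<^sub>v y" and mu: "\<mu> \<noteq> 0"
    and np: "\<And>p q. eigenvalue A p \<Longrightarrow> eigenvalue A q \<Longrightarrow> p ^ D = q ^ D \<Longrightarrow> p = q"
  shows "\<exists>lam. A *\<^sub>v y = lam \<cdot>\<^sub>v y"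
proof -
  obtain \<zeta> where zD: "\<And>k. \<zeta> k ^ D = \<mu>"
    and zinj: "\<And>k l. k < D \<Longrightarrow> l < D \<Longrightarrow> \<zeta> k = \<zeta> l \<Longrightarrow> k = l"
    and zsum: "\<And>m. 0 < m \<Longrightarrow> m < D \<Longrightarrow> (\<Sum>k<D. \<zeta> k ^ m) = 0"
    using roots_exist[OF D mu] by blast
  define u where "u j = (A ^\<^sub>m j) *\<^sub>v y" for j
  have u: "u j \<in> carrier_vec n" for j using A y unfolding u_def by (metis mult_mat_vec_carrier pow_carrier_mat)
  have uS: "A *\<^sub>v u j = u (Suc j)" for j
    unfolding u_def pow_mat_Suc_left[OF A]
    using A y by (simp add: assoc_mult_mat_vec[of _ n n _ n])
  have uD: "u D = \<mu> \<cdot>\<^sub>v y" using Ay by (simp add: u_def)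
  have u0: "u 0 = y" using y A by (simp add: u_def)
  define h where "h k = vec n (\<lambda>i. \<Sum>j<D. \<zeta> k ^ (D - 1 - j) * u j $ i)" for k
  have hc: "h k \<in> carrier_vec n" for k by (simp add: h_def)
  have hA: "A *\<^sub>v h k = \<zeta> k \<cdot>\<^sub>v h k" for k
  proof -
    have e: "A *\<^sub>v h k = vec n (\<lambda>i. \<Sum>j<D. \<zeta> k ^ (D - 1 - j) * (A *\<^sub>v u j) $ i)"
      unfolding h_def by (rule mat_vec_lin_sum[OF A u])
    show ?thesis
    proof (rule eq_vecI)
      show "dim_vec (A *\<^sub>v h k) = dim_vec (\<zeta> k \<cdot>\<^sub>v h k)" using A by (simp add: h_def)
      fix i assume "i < dim_vec (\<zeta> k \<cdot>\<^sub>v h k)"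
      then have i: "i < n" by (simp add: h_def)
      define f where "f j = \<zeta> k ^ (D - j) * u j $ i" for j
      have "(\<Sum>j<D. f (Suc j) - f j) = f D - f 0" by (rule sum_lessThan_telescope)
      also have "\<dots> = 0" using i y zD[of k] by (simp add: f_def uD u0)
      finally have t: "(\<Sum>j<D. f (Suc j) - f j) = 0" .
      have "(\<Sum>j<D. f (Suc j) - f j) = (\<Sum>j<D. \<zeta> k ^ (D - 1 - j) * u (Suc j) $ i) - (\<Sum>j<D. \<zeta> k * (\<zeta> k ^ (D - 1 - j) * u j $ i))"
        unfolding sum_subtractf[symmetric]
      proof (intro sum.cong refl)
        fix j assume "j \<in> {..<D}"
        then have "D - j = Suc (D - 1 - j)" by auto
        then show "f (Suc j) - f j = \<zeta> k ^ (D - 1 - j) * u (Suc j) $ i - \<zeta> k * (\<zeta> k ^ (D - 1 - j) * u j $ i)"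
          unfolding f_def by (simp add: mult.assoc)
      qed
      with t have tt: "(\<Sum>j<D. \<zeta> k ^ (D - 1 - j) * u (Suc j) $ i) = \<zeta> k * (\<Sum>j<D. \<zeta> k ^ (D - 1 - j) * u j $ i)"
        by (simp add: sum_distrib_left)
      have "(A *\<^sub>v h k) $ i = (\<Sum>j<D. \<zeta> k ^ (D - 1 - j) * u (Suc j) $ i)"
        using i by (simp add: e uS)
      also have "\<dots> = (\<zeta> k \<cdot>\<^sub>v h k) $ i" using tt i by (simp add: h_def)
      finally show "(A *\<^sub>v h k) $ i = (\<zeta> k \<cdot>\<^sub>v h k) $ i" .
    qed
  qed
  have hsum: "(\<Sum>k<D. \<zeta> k * h k $ i) = of_nat D * \<mu> * y $ i" if i: "i < n" for i
  proof -
    have "(\<Sum>k<D. \<zeta> k * h k $ i) = (\<Sum>k<D. \<Sum>j<D. \<zeta> k ^ (D - j) * u j $ i)"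
    proof (intro sum.cong refl)
      fix k assume "k \<in> {..<D}"
      have "\<zeta> k * h k $ i = (\<Sum>j<D. \<zeta> k * (\<zeta> k ^ (D - 1 - j) * u j $ i))"
        using i by (simp add: h_def sum_distrib_left)
      also have "\<dots> = (\<Sum>j<D. \<zeta> k ^ (D - j) * u j $ i)"
      proof (intro sum.cong refl)
        fix j assume "j \<in> {..<D}"
        then have "D - j = Suc (D - 1 - j)" by auto
        then show "\<zeta> k * (\<zeta> k ^ (D - 1 - j) * u j $ i) = \<zeta> k ^ (D - j) * u j $ i"
          by (simp add: mult.assoc)
      qed
      finally show "\<zeta> k * h k $ i = (\<Sum>j<D. \<zeta> k ^ (D - j) * u j $ i)" .
    qed
    also have "\<dots> = (\<Sum>j<D. (\<Sum>k<D. \<zeta> k ^ (D - j)) * u j $ i)"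
      by (subst sum.swap) (simp add: sum_distrib_right)
    also have "\<dots> = (\<Sum>k<D. \<zeta> k ^ D) * u 0 $ i"
    proof -
      obtain D' where D': "D = Suc D'" using D by (cases D) auto
      have "(\<Sum>j<D. (\<Sum>k<D. \<zeta> k ^ (D - j)) * u j $ i) =
        (\<Sum>k<D. \<zeta> k ^ (D - 0)) * u 0 $ i + (\<Sum>j<D'. (\<Sum>k<D. \<zeta> k ^ (D - Suc j)) * u (Suc j) $ i)"
        unfolding D' by (rule sum.lessThan_Suc_shift)
      also have "(\<Sum>j<D'. (\<Sum>k<D. \<zeta> k ^ (D - Suc j)) * u (Suc j) $ i) = 0"
        using zsum D' by (intro sum.neutral) auto
      finally show ?thesis by simp
    qed
    also have "\<dots> = of_nat D * \<mu> * y $ i" using zD by (simp add: u0)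
    finally show ?thesis .
  qed
  have hev: "eigenvalue A (\<zeta> k)" if "h k \<noteq> 0\<^sub>v n" for k
    unfolding eigenvalue_def eigenvector_def using that hc hA A by auto
  have "\<exists>k0<D. h k0 \<noteq> 0\<^sub>v n"
  proof (rule ccontr)
    assume "\<not> (\<exists>k0<D. h k0 \<noteq> 0\<^sub>v n)"
    then have hz: "k < D \<Longrightarrow> h k = 0\<^sub>v n" for k by auto
    have "y = 0\<^sub>v n"
    proof (rule eq_vecI)
      show "dim_vec y = dim_vec (0\<^sub>v n)" using y by simp
      fix i assume "i < dim_vec (0\<^sub>v n)"
      then have i: "i < n" by simp
      have "(\<Sum>k<D. \<zeta> k * h k $ i) = 0" using hz i by (intro sum.neutral) auto
      with hsum[OF i] have "of_nat D * \<mu> * y $ i = 0" by simp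
      then show "y $ i = 0\<^sub>v n $ i" using D mu i by simp
    qed
    with y0 show False by simp
  qed
  then obtain k0 where k0: "k0 < D" "h k0 \<noteq> 0\<^sub>v n" by blast
  have others: "h k = 0\<^sub>v n" if "k < D" "k \<noteq> k0" for k
  proof (rule ccontr)
    assume "h k \<noteq> 0\<^sub>v n"
    then have "\<zeta> k = \<zeta> k0" using np[OF hev hev[OF k0(2)]] zD by simp
    then show False using zinj[OF that(1) k0(1)] that(2) by simp
  qed
  define c where "c = \<zeta> k0 / (of_nat D * \<mu>)"
  have yh: "y = c \<cdot>\<^sub>v h k0"
  proof (rule eq_vecI)
    show "dim_vec y = dim_vec (c \<cdot>\<^sub>v h k0)" using y by (simp add: h_def)
    fix i assume "i < dim_vec (c \<cdot>\<^sub>v h k0)"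
    then have i: "i < n" by (simp add: h_def)
    have "(\<Sum>k<D. \<zeta> k * h k $ i) = (\<Sum>k<D. if k = k0 then \<zeta> k0 * h k0 $ i else 0)"
      using others i by (intro sum.cong refl) auto
    also have "\<dots> = \<zeta> k0 * h k0 $ i" using k0 by simp
    finally have "of_nat D * \<mu> * y $ i = \<zeta> k0 * h k0 $ i" using hsum[OF i] by simp
    then show "y $ i = (c \<cdot>\<^sub>v h k0) $ i" using i D mu
      by (simp add: c_def h_def field_simps)
  qed
  have "A *\<^sub>v y = \<zeta> k0 \<cdot>\<^sub>v y"
    unfolding yh using A hc[of k0] hA[of k0]
    by (simp add: mult_mat_vec smult_smult_assoc mult.commute)
  then show ?thesis by blast
qed


lemma invariant_eigvec:
  fixes B M :: "complex mat"
  assumes B: "B \<in> carrier_mat n n" and M: "M \<in> carrier_mat m n"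
    and z0: "z0 \<in> carrier_vec n" "z0 \<noteq> 0\<^sub>v n" "M *\<^sub>v z0 = 0\<^sub>v m"
    and inv: "\<And>z. z \<in> carrier_vec n \<Longrightarrow> M *\<^sub>v z = 0\<^sub>v m \<Longrightarrow> M *\<^sub>v (B *\<^sub>v z) = 0\<^sub>v m"
  shows "\<exists>y \<mu>. y \<in> carrier_vec n \<and> y \<noteq> 0\<^sub>v n \<and> M *\<^sub>v y = 0\<^sub>v m \<and> B *\<^sub>v y = \<mu> \<cdot>\<^sub>v y"
proof -
  define u where "u j = (B ^\<^sub>m j) *\<^sub>v z0" for j
  have u: "u j \<in> carrier_vec n" for j using B z0 unfolding u_def by (metis mult_mat_vec_carrier pow_carrier_mat)
  have uS: "B *\<^sub>v u j = u (Suc j)" for j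
    unfolding u_def pow_mat_Suc_left[OF B]
    using B z0 by (simp add: assoc_mult_mat_vec[of _ n n _ n])
  have u0: "u 0 = z0" using z0 B by (simp add: u_def)
  have Mu: "M *\<^sub>v u j = 0\<^sub>v m" for j
  proof (induct j)
    case 0 then show ?case using z0 u0 by simp
  next
    case (Suc j) then show ?case using inv[OF u] uS by metis
  qed
  (* linear dependence of u 0, ..., u n *)
  define Kr where "Kr = mat (Suc n) (Suc n) (\<lambda>(i,j). if i < n then u j $ i else (0::complex))"
  have Kr: "Kr \<in> carrier_mat (Suc n) (Suc n)" by (simp add: Kr_def)
  have "det Kr = 0"
  proof -
    have "(\<Prod>i = 0..<Suc n. Kr $$ (i, p i)) = 0" if p: "p permutes {0..<Suc n}" for p
    proof (rule prod_zero)
      have "p n < Suc n" using p by (simp add: permutes_in_image)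
      then show "\<exists>a\<in>{0..<Suc n}. Kr $$ (a, p a) = 0" by (intro bexI[of _ n]) (auto simp: Kr_def)
    qed simp
    note pz = this
    have dr: "dim_row Kr = Suc n" "dim_col Kr = Suc n" using Kr by auto
    show ?thesis unfolding det_def dr
      by (simp del: prod.op_ivl_Suc add: pz)
  qed
  then obtain v where v: "v \<in> carrier_vec (Suc n)" "v \<noteq> 0\<^sub>v (Suc n)" "Kr *\<^sub>v v = 0\<^sub>v (Suc n)"
    using det_0_iff_vec_prod_zero[OF Kr] by blast
  define c where "c j = v $ j" for j
  have cnz: "\<exists>j<Suc n. c j \<noteq> 0"
  proof (rule ccontr)
    assume "\<not> (\<exists>j<Suc n. c j \<noteq> 0)"
    then have "v = 0\<^sub>v (Suc n)" using v(1) by (intro eq_vecI) (auto simp: c_def)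
    with v(2) show False by simp
  qed
  have cu: "(\<Sum>j<Suc n. c j * u j $ i) = 0" if i: "i < n" for i
  proof -
    have "(Kr *\<^sub>v v) $ i = 0" using v(3) i by simp
    moreover have "(Kr *\<^sub>v v) $ i = (\<Sum>j<Suc n. u j $ i * v $ j)"
      using i v(1) by (simp add: Kr_def scalar_prod_def lessThan_atLeast0)
    ultimately show ?thesis by (simp add: c_def mult.commute)
  qed
  define q :: "complex poly" where "q = (\<Sum>j<Suc n. monom (c j) j)"
  have cq: "coeff q j = (if j < Suc n then c j else 0)" for j
    unfolding q_def coeff_sum coeff_monom by (simp add: sum.delta')
  have q0: "q \<noteq> 0" using cnz cq by (metis coeff_0)
  have dq: "degree q \<le> n" by (rule degree_le) (simp add: cq)
  define N where "N = Suc (Suc n)"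
  define ev where "ev p = vec n (\<lambda>i. \<Sum>j<N. coeff p j * u j $ i)" for p :: "complex poly"
  have evc: "ev p \<in> carrier_vec n" for p by (simp add: ev_def)
  have evM: "M *\<^sub>v ev p = 0\<^sub>v m" for p
    unfolding ev_def mat_vec_lin_sum[OF M u] Mu by (intro eq_vecI) auto
  have evq: "ev q = 0\<^sub>v n"
  proof (rule eq_vecI)
    fix i assume "i < dim_vec (0\<^sub>v n)"
    then have i: "i < n" by simp
    have "(\<Sum>j<N. coeff q j * u j $ i) = (\<Sum>j<Suc n. c j * u j $ i)"
      unfolding N_def by (simp add: cq)
    then show "ev q $ i = 0\<^sub>v n $ i" using cu[OF i] i by (simp add: ev_def)
  qed (simp add: ev_def)
  have evsmult: "ev (smult a p) = a \<cdot>\<^sub>v ev p" for a p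
    by (intro eq_vecI) (auto simp: ev_def sum_distrib_left mult.assoc)
  have ev1: "ev 1 = z0"
  proof (rule eq_vecI)
    fix i assume "i < dim_vec z0"
    then have i: "i < n" using z0 by simp
    have "(\<Sum>j<N. coeff 1 j * u j $ i) = (\<Sum>j<N. if j = 0 then u 0 $ i else 0)"
      by (intro sum.cong refl) (auto simp: coeff_1)
    also have "\<dots> = z0 $ i" by (simp add: N_def u0)
    finally show "ev 1 $ i = z0 $ i" using i by (simp add: ev_def)
  qed (simp add: ev_def carrier_vecD[OF z0(1)])
  have evstep: "ev ([:- a, 1:] * p) = B *\<^sub>v ev p - a \<cdot>\<^sub>v ev p" if dp: "degree p < Suc n" for a p
  proof (rule eq_vecI)
    fix i assume "i < dim_vec (B *\<^sub>v ev p - a \<cdot>\<^sub>v ev p)"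
    then have i: "i < n" using B by (simp add: ev_def)
    have pc: "coeff p (Suc n) = 0" using dp by (simp add: coeff_eq_0)
    have e1: "[:- a, 1:] * p = smult (- a) p + pCons 0 p" by (simp add: mult_pCons_left)
    have "(B *\<^sub>v ev p) $ i = (\<Sum>j<N. coeff p j * u (Suc j) $ i)"
      unfolding ev_def mat_vec_lin_sum[OF B u] uS using i by simp
    also have "\<dots> = (\<Sum>j<Suc n. coeff p j * u (Suc j) $ i)"
      unfolding N_def using pc by simp
    also have "\<dots> = (\<Sum>j<N. coeff (pCons 0 p) j * u j $ i)"
      unfolding N_def by (subst sum.lessThan_Suc_shift) simp
    finally have e2: "(B *\<^sub>v ev p) $ i = (\<Sum>j<N. coeff (pCons 0 p) j * u j $ i)" .
    show "ev ([:- a, 1:] * p) $ i = (B *\<^sub>v ev p - a \<cdot>\<^sub>v ev p) $ i"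
    proof -
      have "ev ([:- a, 1:] * p) $ i = (\<Sum>j<N. coeff (pCons 0 p) j * u j $ i + (- a) * (coeff p j * u j $ i))"
        unfolding e1 using i by (simp add: ev_def algebra_simps)
      also have "\<dots> = (\<Sum>j<N. coeff (pCons 0 p) j * u j $ i) - a * (\<Sum>j<N. coeff p j * u j $ i)"
        by (simp add: sum_subtractf sum_distrib_left)
      also have "\<dots> = (B *\<^sub>v ev p - a \<cdot>\<^sub>v ev p) $ i"
        using i B e2 by (simp add: ev_def)
      finally show ?thesis .
    qed
  qed (simp add: ev_def B)
  obtain as where fas: "smult (lead_coeff q) (\<Prod>a\<leftarrow>as. [:- a, 1:]) = q" and las: "length as = degree q"
    using fundamental_theorem_algebra_factorized[of q] by blast
  define P where "P k = (\<Prod>a\<leftarrow>take k as. [:- a, 1:])" for k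
  have dP: "degree (P k) \<le> k" for k
  proof -
    have "degree (P k) \<le> sum_list (map degree (map (\<lambda>a. [:- a, 1:]) (take k as)))"
      unfolding P_def by (rule degree_prod_list_le)
    also have "\<dots> = length (take k as)"
    proof -
      have "sum_list (map degree (map (\<lambda>a::complex. [:- a, 1:]) xs)) = length xs" for xs
        by (induct xs) auto
      then show ?thesis .
    qed
    also have "\<dots> \<le> k" by simp
    finally show ?thesis .
  qed
  have P0: "ev (P 0) = z0" by (simp add: P_def ev1)
  have Plen: "ev (P (length as)) = 0\<^sub>v n"
  proof -
    have lc: "lead_coeff q \<noteq> 0" using q0 by simp
    have "ev (smult (lead_coeff q) (P (length as))) = ev q" using fas by (simp add: P_def)
    then have "lead_coeff q \<cdot>\<^sub>v ev (P (length as)) = 0\<^sub>v n"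
      using evq evsmult by simp
    show ?thesis
    proof (rule eq_vecI)
      fix i assume "i < dim_vec (0\<^sub>v n :: complex vec)"
      then have i: "i < n" by simp
      have "(lead_coeff q \<cdot>\<^sub>v ev (P (length as))) $ i = 0" using \<open>lead_coeff q \<cdot>\<^sub>v ev (P (length as)) = 0\<^sub>v n\<close> i by simp
      then show "ev (P (length as)) $ i = 0\<^sub>v n $ i" using i lc by (simp add: ev_def)
    qed (simp add: ev_def)
  qed
  define m0 where "m0 = (LEAST k. ev (P k) = 0\<^sub>v n)"
  have m0: "ev (P m0) = 0\<^sub>v n" unfolding m0_def by (rule LeastI[of _ "length as"]) (rule Plen)
  have m0le: "m0 \<le> length as" unfolding m0_def by (rule Least_le) (rule Plen)
  have "m0 \<noteq> 0" using m0 P0 z0 by auto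
  then obtain k where k: "m0 = Suc k" by (cases m0) auto
  have yk: "ev (P k) \<noteq> 0\<^sub>v n" using not_less_Least[of k "\<lambda>k. ev (P k) = 0\<^sub>v n"] k m0_def by auto
  have klen: "k < length as" using m0le k by simp
  have PS: "P (Suc k) = [:- (as ! k), 1:] * P k"
    unfolding P_def using klen by (simp add: take_Suc_conv_app_nth mult.commute)
  have "degree (P k) < Suc n" using dP[of k] klen las dq by simp
  then have "B *\<^sub>v ev (P k) - (as ! k) \<cdot>\<^sub>v ev (P k) = 0\<^sub>v n"
    using evstep m0 k PS by metis
  then have "B *\<^sub>v ev (P k) = (as ! k) \<cdot>\<^sub>v ev (P k)"
  proof -
    assume a: "B *\<^sub>v ev (P k) - (as ! k) \<cdot>\<^sub>v ev (P k) = 0\<^sub>v n"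
    show ?thesis
    proof (rule eq_vecI)
      fix i assume "i < dim_vec ((as ! k) \<cdot>\<^sub>v ev (P k))"
      then have i: "i < n" by (simp add: ev_def)
      have "(B *\<^sub>v ev (P k) - (as ! k) \<cdot>\<^sub>v ev (P k)) $ i = 0" using a i by simp
      then show "(B *\<^sub>v ev (P k)) $ i = ((as ! k) \<cdot>\<^sub>v ev (P k)) $ i" using i B by (simp add: ev_def)
    qed (use B in \<open>simp add: ev_def\<close>)
  qed
  then show ?thesis using evc yk evM by blast
qed


lemma set_cols_iff: "v \<in> set (cols A) \<longleftrightarrow> (\<exists>j<dim_col A. v = col A j)"
  by (metis cols_length cols_nth in_set_conv_nth)

lemma rank_increase:
  fixes M M' :: "'a :: field mat"
  assumes M: "M \<in> carrier_mat m nc" and M': "M' \<in> carrier_mat m' nc" and mm: "m \<le> m'"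
    and top: "\<And>i j. i < m \<Longrightarrow> j < nc \<Longrightarrow> M' $$ (i,j) = M $$ (i,j)"
    and x: "x \<in> carrier_vec nc" "M *\<^sub>v x = 0\<^sub>v m" "M' *\<^sub>v x \<noteq> 0\<^sub>v m'"
  shows "vec_space.rank m M < vec_space.rank m' M'"
proof -
  interpret V: vec_space "TYPE('a)" m .
  interpret W: vec_space "TYPE('a)" m' .
  let ?P = "\<lambda>T. T \<subseteq> set (cols M) \<and> V.lin_indpt T"
  obtain S where maxS: "maximal S ?P"
    using maximal_exists[of ?P "card (set (cols M))" "{}"]
    by (meson List.finite_set card_mono empty_iff empty_subsetI V.finite_lin_indpt2 rev_finite_subset)
  have rankM: "V.rank M = card S" by (rule V.rank_card_indpt[OF M maxS])
  have SC: "S \<subseteq> set (cols M)" and Sli: "V.lin_indpt S" using maxS unfolding maximal_def by auto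
  have finS: "finite S" using SC finite_subset by blast
  have Scar: "S \<subseteq> carrier_vec m" using SC M cols_dim[of M] by auto
  define J where "J s = (SOME j. j < nc \<and> s = col M j)" for s
  have J: "J s < nc \<and> s = col M (J s)" if "s \<in> S" for s
  proof -
    from that SC have "s \<in> set (cols M)" by auto
    then obtain j where "j < dim_col M" "s = col M j" unfolding set_cols_iff by blast
    then have "j < nc" "s = col M j" using M by auto
    then show ?thesis unfolding J_def by (intro someI[of "\<lambda>j. j < nc \<and> s = col M j"]) auto
  qed
  define g where "g s = col M' (J s)" for s
  have gi: "g s $ i = s $ i" if "s \<in> S" "i < m" for s i
  proof -
    have "g s $ i = M' $$ (i, J s)" using J[OF that(1)] that(2) mm M' by (simp add: g_def)
    also have "\<dots> = M $$ (i, J s)" using top J[OF that(1)] that(2) by simp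
    also have "\<dots> = s $ i" using J[OF that(1)] that(2) M by (metis carrier_matD index_col)
    finally show ?thesis .
  qed
  have ginj: "inj_on g S"
  proof (rule inj_onI)
    fix s s' assume s: "s \<in> S" "s' \<in> S" "g s = g s'"
    show "s = s'"
    proof (rule eq_vecI)
      have ds: "dim_vec s = m" "dim_vec s' = m" using s(1,2) Scar by (metis carrier_vecD subsetD)+
      show "dim_vec s = dim_vec s'" using ds by simp
      fix i assume "i < dim_vec s'"
      then have "i < m" using ds by simp
      then show "s $ i = s' $ i" using gi s by metis
    qed
  qed
  define S' where "S' = g ` S"
  have finS': "finite S'" using finS by (simp add: S'_def)
  have S'C: "S' \<subseteq> set (cols M')"
  proof
    fix v assume "v \<in> S'"
    then obtain s where s: "s \<in> S" "v = g s" by (auto simp: S'_def)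
    then show "v \<in> set (cols M')" using J[OF s(1)] M' unfolding set_cols_iff g_def by auto
  qed
  have S'car: "S' \<subseteq> carrier_vec m'" using S'C M' cols_dim[of M'] by auto
  have cardS': "card S' = card S" using ginj by (simp add: S'_def card_image)
  have Kb: "\<forall>v\<in>S'. b v = 0" if hb: "\<And>i. i < m \<Longrightarrow> (\<Sum>v\<in>S'. b v * v $ i) = 0" for b
  proof -
    have "V.lincomb (b \<circ> g) S = 0\<^sub>v m"
    proof (rule eq_vecI)
      show "dim_vec (V.lincomb (b \<circ> g) S) = dim_vec (0\<^sub>v m)"
        using V.lincomb_dim[OF finS Scar] by simp
      fix i assume "i < dim_vec (0\<^sub>v m)"
      then have i: "i < m" by simp
      have "V.lincomb (b \<circ> g) S $ i = (\<Sum>s\<in>S. b (g s) * s $ i)"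
        using V.lincomb_index[OF i Scar] by simp
      also have "\<dots> = (\<Sum>s\<in>S. b (g s) * g s $ i)" using gi i by simp
      also have "\<dots> = (\<Sum>v\<in>S'. b v * v $ i)" unfolding S'_def
        by (rule sum.reindex[OF ginj, symmetric, unfolded comp_def])
      also have "\<dots> = 0" using hb[OF i] .
      finally show "V.lincomb (b \<circ> g) S $ i = 0\<^sub>v m $ i" using i by simp
    qed
    show ?thesis
    proof (rule ccontr)
      assume "\<not> (\<forall>v\<in>S'. b v = 0)"
      then obtain s where s: "s \<in> S" "b (g s) \<noteq> 0" by (auto simp: S'_def)
      have "V.lin_dep S"
        by (rule V.lin_dep_crit[OF finS subset_refl _ s(1)]) (use s \<open>V.lincomb (b \<circ> g) S = 0\<^sub>v m\<close> in auto)
      with Sli show False by simp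
    qed
  qed
  have S'li: "W.lin_indpt S'"
  proof (rule W.finite_lin_indpt2[OF finS' S'car])
    fix a assume a: "W.lincomb a S' = 0\<^sub>v m'"
    show "\<forall>v\<in>S'. a v = 0"
    proof (rule Kb)
      fix i assume i: "i < m"
      have "(\<Sum>v\<in>S'. a v * v $ i) = W.lincomb a S' $ i"
        using W.lincomb_index[of i S' a] i mm S'car by simp
      also have "\<dots> = 0" using a i mm by simp
      finally show "(\<Sum>v\<in>S'. a v * v $ i) = 0" .
    qed
  qed
  have "\<exists>k<nc. col M' k \<notin> W.span S'"
  proof (rule ccontr)
    assume "\<not> (\<exists>k<nc. col M' k \<notin> W.span S')"
    then have "\<forall>k<nc. \<exists>a. W.lincomb a S' = col M' k"
      using W.finite_in_span[OF finS' S'car] by blast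
    then obtain AA where AA: "\<And>k. k < nc \<Longrightarrow> W.lincomb (AA k) S' = col M' k" by metis
    define bb where "bb v = (\<Sum>k<nc. x $ k * AA k v)" for v
    have Mx: "(M' *\<^sub>v x) $ i = (\<Sum>v\<in>S'. bb v * v $ i)" if i: "i < m'" for i
    proof -
      have "(M' *\<^sub>v x) $ i = (\<Sum>k<nc. M' $$ (i,k) * x $ k)"
        using M' x(1) i by (simp add: scalar_prod_def lessThan_atLeast0)
      also have "\<dots> = (\<Sum>k<nc. (\<Sum>v\<in>S'. AA k v * v $ i) * x $ k)"
      proof (intro sum.cong refl)
        fix k assume "k \<in> {..<nc}"
        then have k: "k < nc" by simp
        have "M' $$ (i,k) = col M' k $ i" using M' i k by simp
        also have "\<dots> = W.lincomb (AA k) S' $ i" using AA[OF k] by simp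
        also have "\<dots> = (\<Sum>v\<in>S'. AA k v * v $ i)" using W.lincomb_index[OF i S'car] .
        finally show "M' $$ (i,k) * x $ k = (\<Sum>v\<in>S'. AA k v * v $ i) * x $ k" by simp
      qed
      also have "\<dots> = (\<Sum>v\<in>S'. bb v * v $ i)"
        unfolding bb_def by (simp add: sum_distrib_right sum_distrib_left mult_ac) (rule sum.swap)
      finally show ?thesis .
    qed
    have "\<forall>v\<in>S'. bb v = 0"
    proof (rule Kb)
      fix i assume i: "i < m"
      have "(M' *\<^sub>v x) $ i = (M *\<^sub>v x) $ i"
        using M M' x(1) i mm top by (auto simp: scalar_prod_def intro!: sum.cong)
      then show "(\<Sum>v\<in>S'. bb v * v $ i) = 0" using Mx[of i] i mm x(2) by simp
    qed
    then have "M' *\<^sub>v x = 0\<^sub>v m'" using M' Mx by (intro eq_vecI) auto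
    with x(3) show False by simp
  qed
  then obtain k where k: "k < nc" "col M' k \<notin> W.span S'" by blast
  have ck: "col M' k \<in> carrier_vec m'" using M' k by simp
  have "col M' k \<notin> S'" using k W.in_own_span[OF S'car] by blast
  then have li2: "W.lin_indpt (S' \<union> {col M' k})"
    using W.lin_dep_iff_in_span[OF S'car S'li ck] k(2) by simp
  have sub2: "S' \<union> {col M' k} \<subseteq> set (cols M')" using S'C k M' by (auto simp: set_cols_iff)
  have "card (S' \<union> {col M' k}) = Suc (card S)"
    using \<open>col M' k \<notin> S'\<close> finS' cardS' by simp
  moreover have "card (S' \<union> {col M' k}) \<le> W.rank M'"
    by (rule W.rank_ge_card_indpt[OF M' sub2 li2])
  ultimately show ?thesis using rankM by simp
qed


lemma obs_entry:
  assumes C: "C \<in> carrier_mat 1 n" and A: "A \<in> carrier_mat n n" and i: "i < length ss" and j: "j < n"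
  shows "sample_obs_mat n C A ss $$ (i,j) = (C * A ^\<^sub>m (ss ! i)) $$ (0,j)"
proof -
  have "C * A ^\<^sub>m (ss ! i) \<in> carrier_mat 1 n" using C A by simp
  then have d: "dim_row (C * A ^\<^sub>m (ss ! i)) = 1" "dim_col (C * A ^\<^sub>m (ss ! i)) = n" by auto
  then show ?thesis using i j by (simp add: sample_obs_mat_def mat_of_rows_def out_row_def)
qed

lemma obs_carrier: "sample_obs_mat n C A ss \<in> carrier_mat (length ss) n"
  unfolding sample_obs_mat_def using mat_of_rows_carrier(1)[of n "map (out_row C A) ss"] by simp

lemma obs_mv_c:
  assumes C: "C \<in> carrier_mat 1 n" and A: "A \<in> carrier_mat n n" and i: "i < length ss"
    and y: "y \<in> carrier_vec n"
  shows "(map_mat complex_of_real (sample_obs_mat n C A ss) *\<^sub>v y) $ i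
       = ((map_mat complex_of_real C * map_mat complex_of_real A ^\<^sub>m (ss ! i)) *\<^sub>v y) $ 0"
proof -
  have CA: "C * A ^\<^sub>m (ss ! i) \<in> carrier_mat 1 n" using C A by simp
  have h: "map_mat complex_of_real C * map_mat complex_of_real A ^\<^sub>m (ss ! i)
      = map_mat complex_of_real (C * A ^\<^sub>m (ss ! i))"
    using C A by (simp add: of_real_hom.mat_hom_mult[of _ 1 n _ n] of_real_hom.mat_hom_pow)
  have d: "dim_row (C * A ^\<^sub>m (ss ! i)) = 1" "dim_col (C * A ^\<^sub>m (ss ! i)) = n" using CA by auto
  show ?thesis unfolding h using i y CA obs_carrier[of n C A ss] d
    by (auto simp: scalar_prod_def obs_entry[OF C A i] intro!: sum.cong)
qed

lemma real_mv_split: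
  fixes X :: "real mat" and z :: "complex vec"
  assumes X: "X \<in> carrier_mat r n" and z: "z \<in> carrier_vec n" and i: "i < r"
  shows "(map_mat complex_of_real X *\<^sub>v z) $ i =
    complex_of_real ((X *\<^sub>v vec n (\<lambda>j. Re (z $ j))) $ i) + \<i> * complex_of_real ((X *\<^sub>v vec n (\<lambda>j. Im (z $ j))) $ i)"
proof -
  have "(map_mat complex_of_real X *\<^sub>v z) $ i = (\<Sum>j<n. complex_of_real (X $$ (i,j)) * z $ j)"
    using X z i by (simp add: scalar_prod_def lessThan_atLeast0)
  also have "\<dots> = (\<Sum>j<n. complex_of_real (X $$ (i,j) * Re (z $ j)) + \<i> * complex_of_real (X $$ (i,j) * Im (z $ j)))"
  proof (intro sum.cong refl)
    fix j
    show "complex_of_real (X $$ (i,j)) * z $ j = complex_of_real (X $$ (i,j) * Re (z $ j)) + \<i> * complex_of_real (X $$ (i,j) * Im (z $ j))"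
      by (simp add: complex_eq_iff)
  qed
  also have "\<dots> = complex_of_real ((X *\<^sub>v vec n (\<lambda>j. Re (z $ j))) $ i) + \<i> * complex_of_real ((X *\<^sub>v vec n (\<lambda>j. Im (z $ j))) $ i)"
    using X i by (simp add: scalar_prod_def lessThan_atLeast0 sum.distrib sum_distrib_left)
  finally show ?thesis .
qed

lemma real_kernel_transfer:
  fixes X Y :: "real mat"
  assumes X: "X \<in> carrier_mat r n" and Y: "Y \<in> carrier_mat r' n"
    and H: "\<And>x. x \<in> carrier_vec n \<Longrightarrow> X *\<^sub>v x = 0\<^sub>v r \<Longrightarrow> Y *\<^sub>v x = 0\<^sub>v r'"
    and z: "z \<in> carrier_vec n" and Xz: "map_mat complex_of_real X *\<^sub>v z = 0\<^sub>v r"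
  shows "map_mat complex_of_real Y *\<^sub>v z = 0\<^sub>v r'"
proof -
  define a where "a = vec n (\<lambda>j. Re (z $ j))"
  define b where "b = vec n (\<lambda>j. Im (z $ j))"
  have ab: "a \<in> carrier_vec n" "b \<in> carrier_vec n" by (auto simp: a_def b_def)
  have "X *\<^sub>v a = 0\<^sub>v r \<and> X *\<^sub>v b = 0\<^sub>v r"
  proof -
    have *: "(X *\<^sub>v a) $ i = 0 \<and> (X *\<^sub>v b) $ i = 0" if i: "i < r" for i
    proof -
      have "(map_mat complex_of_real X *\<^sub>v z) $ i = 0" using Xz i by simp
      then have "complex_of_real ((X *\<^sub>v a) $ i) + \<i> * complex_of_real ((X *\<^sub>v b) $ i) = 0"
        using real_mv_split[OF X z i] by (simp add: a_def b_def)
      then show ?thesis by (simp add: complex_eq_iff)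
    qed
    show ?thesis using * X by (auto intro!: eq_vecI)
  qed
  then have "Y *\<^sub>v a = 0\<^sub>v r'" "Y *\<^sub>v b = 0\<^sub>v r'" using H ab by auto
  then show ?thesis using Y real_mv_split[OF Y z] by (intro eq_vecI) (auto simp: a_def b_def)
qed

theorem lemma5:
  fixes n :: nat and A C :: "real mat" and t :: "nat \<Rightarrow> nat" and \<Delta> :: nat
  assumes "n \<ge> 1"
    and "A \<in> carrier_mat n n" and "C \<in> carrier_mat 1 n"
    and "observable n A C"
    and "\<forall>lam. ceigenvalue A lam \<longrightarrow> lam \<noteq> 0"
    and "mrank n (sample_obs_mat n C A (map t [0..<n])) < n"
    and "\<Delta> > 0" and "\<not> pathological A \<Delta>"
  shows "mrank (2 * n) (sample_obs_mat n C A (map t [0..<n] @ map (\<lambda>i. t i + \<Delta>) [0..<n]))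
         > mrank n (sample_obs_mat n C A (map t [0..<n]))"
proof (rule ccontr)
  note n1 = assms(1) and A = assms(2) and C = assms(3) and obs = assms(4) and nz = assms(5)
    and lowrank = assms(6) and D = assms(7) and np = assms(8)
  define ts where "ts = map t [0..<n]"
  define ts' where "ts' = map (\<lambda>i. t i + \<Delta>) [0..<n]"
  define M where "M = sample_obs_mat n C A ts"
  define N where "N = sample_obs_mat n C A ts'"
  define M' where "M' = sample_obs_mat n C A (ts @ ts')"
  assume "\<not> ?thesis"
  then have nr: "\<not> mrank n M < mrank (2 * n) M'" unfolding M_def M'_def ts_def ts'_def .
  have Mc: "M \<in> carrier_mat n n" using obs_carrier[of n C A ts] by (simp add: M_def ts_def)
  have Nc: "N \<in> carrier_mat n n" using obs_carrier[of n C A ts'] by (simp add: N_def ts'_def)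
  have M'c: "M' \<in> carrier_mat (2 * n) n" using obs_carrier[of n C A "ts @ ts'"] by (simp add: M'_def ts_def ts'_def mult_2)
  have H: "N *\<^sub>v x = 0\<^sub>v n" if x: "x \<in> carrier_vec n" "M *\<^sub>v x = 0\<^sub>v n" for x
  proof (rule ccontr)
    assume Nx: "N *\<^sub>v x \<noteq> 0\<^sub>v n"
    have top: "M' $$ (i,j) = M $$ (i,j)" if "i < n" "j < n" for i j
      using that obs_entry[OF C A, of i "ts @ ts'" j] obs_entry[OF C A, of i ts j]
      by (simp add: M'_def M_def ts_def ts'_def nth_append)
    have "M' *\<^sub>v x \<noteq> 0\<^sub>v (2 * n)"
    proof
      assume M'x: "M' *\<^sub>v x = 0\<^sub>v (2 * n)"
      have "N *\<^sub>v x = 0\<^sub>v n"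
      proof (rule eq_vecI)
        fix i assume "i < dim_vec (0\<^sub>v n :: real vec)"
        then have i: "i < n" by simp
        have "(M' *\<^sub>v x) $ (n + i) = 0" using M'x i by simp
        moreover have "(M' *\<^sub>v x) $ (n + i) = (N *\<^sub>v x) $ i"
          using i M'c Nc x(1) obs_entry[OF C A, of "n + i" "ts @ ts'"] obs_entry[OF C A, of i ts']
          by (auto simp: scalar_prod_def M'_def N_def ts_def ts'_def nth_append intro!: sum.cong)
        ultimately show "(N *\<^sub>v x) $ i = 0\<^sub>v n $ i" using i by simp
      qed (use Nc in simp)
      with Nx show False by simp
    qed
    then have "mrank n M < mrank (2 * n) M'"
      by (intro rank_increase[OF Mc M'c _ top x]) auto
    with nr show False by simp
  qed
  have NMA: "N = M * A ^\<^sub>m \<Delta>"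
  proof (rule eq_matI)
    fix i j assume "i < dim_row (M * A ^\<^sub>m \<Delta>)" "j < dim_col (M * A ^\<^sub>m \<Delta>)"
    then have i: "i < n" and j: "j < n" using Mc A by (auto simp: carrier_matD split: if_splits)
    have CA: "C * A ^\<^sub>m t i \<in> carrier_mat 1 n" using C A by simp
    have "(M * A ^\<^sub>m \<Delta>) $$ (i,j) = (\<Sum>l<n. M $$ (i,l) * (A ^\<^sub>m \<Delta>) $$ (l,j))"
      using Mc A i j by (simp add: scalar_prod_def lessThan_atLeast0)
    also have "\<dots> = (\<Sum>l<n. (C * A ^\<^sub>m t i) $$ (0,l) * (A ^\<^sub>m \<Delta>) $$ (l,j))"
      using obs_entry[OF C A, of i ts] i by (simp add: M_def ts_def)
    also have "\<dots> = (C * A ^\<^sub>m t i * A ^\<^sub>m \<Delta>) $$ (0,j)"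
    proof -
      have d: "dim_row (C * A ^\<^sub>m t i) = 1" "dim_col (C * A ^\<^sub>m t i) = n"
        "dim_row (A ^\<^sub>m \<Delta>) = n" "dim_col (A ^\<^sub>m \<Delta>) = n" using CA A by auto
      show ?thesis using j d by (simp add: scalar_prod_def lessThan_atLeast0)
    qed
    also have "C * A ^\<^sub>m t i * A ^\<^sub>m \<Delta> = C * A ^\<^sub>m (t i + \<Delta>)"
      using C A by (simp add: pow_mat_add[OF A] assoc_mult_mat[of _ 1 n _ n _ n])
    also have "\<dots> $$ (0,j) = N $$ (i,j)"
      using obs_entry[OF C A, of i ts' j] i j by (simp add: N_def ts'_def)
    finally show "N $$ (i,j) = (M * A ^\<^sub>m \<Delta>) $$ (i,j)" by simp
  qed (use Nc Mc A in auto)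
  define Ac where "Ac = map_mat complex_of_real A"
  define Cc where "Cc = map_mat complex_of_real C"
  define Mx where "Mx = map_mat complex_of_real M"
  define Bc where "Bc = Ac ^\<^sub>m \<Delta>"
  have Acc: "Ac \<in> carrier_mat n n" using A by (simp add: Ac_def)
  have Ccc: "Cc \<in> carrier_mat 1 n" using C by (simp add: Cc_def)
  have Mxc: "Mx \<in> carrier_mat n n" using Mc by (simp add: Mx_def)
  have Bcc: "Bc \<in> carrier_mat n n" using Acc by (simp add: Bc_def)
  have NcMB: "map_mat complex_of_real N = Mx * Bc"
    unfolding NMA Mx_def Bc_def Ac_def
    using Mc A by (simp add: of_real_hom.mat_hom_mult[of _ n n _ n] of_real_hom.mat_hom_pow)
  have inv: "Mx *\<^sub>v (Bc *\<^sub>v z) = 0\<^sub>v n" if z: "z \<in> carrier_vec n" "Mx *\<^sub>v z = 0\<^sub>v n" for z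
  proof -
    have "map_mat complex_of_real N *\<^sub>v z = 0\<^sub>v n"
      by (rule real_kernel_transfer[OF Mc Nc H z(1) z(2)[unfolded Mx_def]])
    then show ?thesis unfolding NcMB using Mxc Bcc z(1) by (simp add: assoc_mult_mat_vec[of _ n n _ n])
  qed
  interpret V: vec_space "TYPE(real)" n .
  have "det M = 0" using V.det_rank_iff[OF Mc] lowrank by (simp add: M_def ts_def)
  then obtain x0 where x0: "x0 \<in> carrier_vec n" "x0 \<noteq> 0\<^sub>v n" "M *\<^sub>v x0 = 0\<^sub>v n"
    using det_0_iff_vec_prod_zero[OF Mc] by blast
  define z0 where "z0 = map_vec complex_of_real x0"
  have z0: "z0 \<in> carrier_vec n" "z0 \<noteq> 0\<^sub>v n" "Mx *\<^sub>v z0 = 0\<^sub>v n"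
    using x0 Mc by (auto simp: z0_def Mx_def of_real_hom.mult_mat_vec_hom[symmetric])
  obtain y \<mu> where y: "y \<in> carrier_vec n" "y \<noteq> 0\<^sub>v n" "Mx *\<^sub>v y = 0\<^sub>v n" "Bc *\<^sub>v y = \<mu> \<cdot>\<^sub>v y"
    using invariant_eigvec[OF Bcc Mxc z0 inv] by blast
  have eigz: "lam \<noteq> 0" if "eigenvalue Ac lam" for lam
    using nz that by (simp add: ceigenvalue_def Ac_def)
  have pow_step: "Ac *\<^sub>v (Ac ^\<^sub>m k *\<^sub>v v) = Ac ^\<^sub>m Suc k *\<^sub>v v" if "v \<in> carrier_vec n" for k v
    unfolding pow_mat_Suc_left[OF Acc] using Acc that by (simp add: assoc_mult_mat_vec[of _ n n _ n])
  have mu: "\<mu> \<noteq> 0"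
  proof
    assume "\<mu> = 0"
    then have Z: "Ac ^\<^sub>m \<Delta> *\<^sub>v y = 0\<^sub>v n" using y(4) y(1) by (simp add: Bc_def) (intro eq_vecI, auto)
    define j where "j = (LEAST j. Ac ^\<^sub>m j *\<^sub>v y = 0\<^sub>v n)"
    have j: "Ac ^\<^sub>m j *\<^sub>v y = 0\<^sub>v n" unfolding j_def by (rule LeastI[of _ \<Delta>]) (rule Z)
    have "j \<noteq> 0" using j y Acc by auto
    then obtain k where k: "j = Suc k" by (cases j) auto
    have w0: "Ac ^\<^sub>m k *\<^sub>v y \<noteq> 0\<^sub>v n" using not_less_Least[of k "\<lambda>j. Ac ^\<^sub>m j *\<^sub>v y = 0\<^sub>v n"] k j_def by auto
    have "Ac *\<^sub>v (Ac ^\<^sub>m k *\<^sub>v y) = 0 \<cdot>\<^sub>v (Ac ^\<^sub>m k *\<^sub>v y)"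
      using pow_step[OF y(1), of k] j k Acc y(1) by auto
    then have "eigenvalue Ac 0" unfolding eigenvalue_def eigenvector_def
      using w0 Acc y(1) mult_mat_vec_carrier[OF pow_carrier_mat[OF Acc, of k] y(1)]
      by (intro exI[of _ "Ac ^\<^sub>m k *\<^sub>v y"]) auto
    with eigz show False by blast
  qed
  have npc: "p = q" if "eigenvalue Ac p" "eigenvalue Ac q" "p ^ \<Delta> = q ^ \<Delta>" for p q
    using np D that by (auto simp: pathological_def ceigenvalue_def Ac_def)
  obtain lam where lam: "Ac *\<^sub>v y = lam \<cdot>\<^sub>v y"
    using root_eigvec[OF Acc y(1) y(2) D y(4)[unfolded Bc_def] mu npc] by blast
  have ev: "eigenvector Ac y lam" unfolding eigenvector_def using lam y Acc by auto
  then have "lam \<noteq> 0" using eigz unfolding eigenvalue_def by blast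
  have powy: "Ac ^\<^sub>m k *\<^sub>v y = lam ^ k \<cdot>\<^sub>v y" for k by (rule eigenvector_pow[OF Acc ev])
  have Cy_gen: "((Cc * Ac ^\<^sub>m k) *\<^sub>v y) $ 0 = lam ^ k * (Cc *\<^sub>v y) $ 0" for k
  proof -
    have "(Cc * Ac ^\<^sub>m k) *\<^sub>v y = Cc *\<^sub>v (lam ^ k \<cdot>\<^sub>v y)"
      using Ccc Acc y(1) powy[of k] by (simp add: assoc_mult_mat_vec[of _ 1 n _ n])
    also have "\<dots> = lam ^ k \<cdot>\<^sub>v (Cc *\<^sub>v y)" using Ccc y(1) by (simp add: mult_mat_vec)
    finally show ?thesis using Ccc by simp
  qed
  have "(Mx *\<^sub>v y) $ 0 = 0" using y(3) n1 by simp
  moreover have "(Mx *\<^sub>v y) $ 0 = ((Cc * Ac ^\<^sub>m (ts ! 0)) *\<^sub>v y) $ 0"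
    unfolding Mx_def M_def Cc_def Ac_def by (rule obs_mv_c[OF C A _ y(1)]) (use n1 in \<open>simp add: ts_def\<close>)
  ultimately have Cy: "(Cc *\<^sub>v y) $ 0 = 0" using Cy_gen \<open>lam \<noteq> 0\<close> by simp
  define Ob where "Ob = sample_obs_mat n C A [0..<n]"
  have Oc: "Ob \<in> carrier_mat n n" using obs_carrier[of n C A "[0..<n]"] by (simp add: Ob_def)
  have "map_mat complex_of_real Ob *\<^sub>v y = 0\<^sub>v n"
  proof (rule eq_vecI)
    fix i assume "i < dim_vec (0\<^sub>v n :: complex vec)"
    then have i: "i < n" by simp
    have "(map_mat complex_of_real Ob *\<^sub>v y) $ i = ((Cc * Ac ^\<^sub>m ([0..<n] ! i)) *\<^sub>v y) $ 0"
      unfolding Ob_def Cc_def Ac_def by (rule obs_mv_c[OF C A _ y(1)]) (use i in simp)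
    also have "\<dots> = 0" using Cy_gen Cy by simp
    finally show "(map_mat complex_of_real Ob *\<^sub>v y) $ i = 0\<^sub>v n $ i" using i by simp
  qed (use Oc in simp)
  then have "det (map_mat complex_of_real Ob) = 0"
    using det_0_iff_vec_prod_zero[of "map_mat complex_of_real Ob" n] Oc y(1,2) by auto
  then have "det Ob = 0" by (simp add: of_real_hom.hom_det)
  moreover have "det Ob \<noteq> 0" using V.det_rank_iff[OF Oc] obs by (simp add: observable_def Ob_def)
  ultimately show False by simp
qed


end
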